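(* Let $\tilde q=q^2$. For all integers $v\geq 1$ and $L\geq 0$, \[ \sum_{n_1,\ldots,n_v\geq 0} \frac{\tilde q^{\sum_{i=1}^v N_i(N_i+1)}}{(\tilde q)_{n_1}\cdots(\tilde q)_{n_{v-1}}(\tilde q)_{2n_v}}\cdot\frac{(q^3;q^6)_{n_v}}{(q;q^2)_{1+n_v}}\cdot\frac{(\tilde q)_{2L+1}}{(\tilde q)_{L-N_1}} =\sum_{j=-\infty}^{\infty} (-1)^j q^{(2v+1)j^2-2vj}\left(\frac{j+1}{3}\right){2L+1 \brack L+j}_{\tilde q}, \] where $N_i=n_i+n_{i+1}+\cdots+n_v$ for $i=1,\ldots,v$ (for $v=1$ the product $(\tilde q)_{n_1}\cdots(\tilde q)_{n_{v-1}}$ is empty).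
   Context: For a variable $a$ and integer $n\ge 0$, $(a;q)_n=(1-a)(1-aq)\cdots(1-aq^{n-1})$, and $(\tilde q)_n=(\tilde q;\tilde q)_n$; by convention $1/(\tilde q)_n=0$ for negative integers $n$. The $q$-binomial coefficient in base $\tilde q$ is ${A \brack B}_{\tilde q}=\frac{(\tilde q;\tilde q)_A}{(\tilde q;\tilde q)_B(\tilde q;\tilde q)_{A-B}}$ if $0\le B\le A$ are integers, and $0$ otherwise. $\left(\frac{j}{3}\right)$ is the Legendre symbol modulo 3: it equals $1$ if $j\equiv 1 \pmod 3$, $-1$ if $j\equiv -1\pmod 3$, and $0$ if $3\mid j$. *)

theory Defs
  imports "HOL-Analysis.Analysis"
begin

definition qpoch :: "complex \<Rightarrow> complex \<Rightarrow> nat \<Rightarrow> complex" where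
  "qpoch a q n = (\<Prod>k<n. 1 - a * q ^ k)"

definition inv_qfac :: "complex \<Rightarrow> int \<Rightarrow> complex" where
  "inv_qfac qt m = (if m < 0 then 0 else 1 / qpoch qt qt (nat m))"

definition qbinom :: "complex \<Rightarrow> int \<Rightarrow> int \<Rightarrow> complex" where
  "qbinom qt A B = (if 0 \<le> B \<and> B \<le> A
      then qpoch qt qt (nat A) / (qpoch qt qt (nat B) * qpoch qt qt (nat (A - B))) else 0)"

definition leg3 :: "int \<Rightarrow> int" where
  "leg3 j = (if j mod 3 = 1 then 1 else if j mod 3 = 2 then -1 else 0)"

definition Nsum :: "(nat \<Rightarrow> nat) \<Rightarrow> nat \<Rightarrow> nat \<Rightarrow> nat" where
  "Nsum n v i = (\<Sum>k=i..v. n k)"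

text \<open>Index set: tuples (n_1,...,n_v) of nonnegative integers, encoded as
  functions nat => nat vanishing outside {1..v}.\<close>
definition tuples :: "nat \<Rightarrow> (nat \<Rightarrow> nat) set" where
  "tuples v = {n. \<forall>i. i \<notin> {1..v} \<longrightarrow> n i = 0}"

end

theory Submission imports Defs begin

lemma qpoch_Suc: "qpoch a q (Suc n) = qpoch a q n * (1 - a * q^n)"
  by (simp add: qpoch_def)
lemma qpoch_0[simp]: "qpoch a q 0 = 1" by (simp add: qpoch_def)

lemma qpoch_nz: assumes "norm a < 1" "norm q \<le> 1" shows "qpoch a q n \<noteq> 0"
proof -
  have "1 - a*q^k \<noteq> 0" for k
  proof
    assume "1 - a*q^k = 0" then have "a*q^k = 1" by simp
    then have "norm (a*q^k) = 1" by simp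
    moreover have "norm q ^ k \<le> 1" using assms by (simp add: power_le_one)
    then have "norm a * norm q ^ k \<le> norm a" by (simp add: mult_left_le)
    then have "norm (a*q^k) < 1" using assms by (simp add: norm_mult norm_power)
    ultimately show False by simp
  qed
  then show ?thesis by (simp add: qpoch_def)
qed

lemma FF_nz: "norm (p::complex) < 1 \<Longrightarrow> qpoch p p n \<noteq> 0"
  by (rule qpoch_nz) auto

lemma FF_Suc: "qpoch p p (Suc n) = qpoch p p n * (1 - p ^ Suc n)"
  by (simp add: qpoch_Suc)

definition gb :: "complex \<Rightarrow> nat \<Rightarrow> nat \<Rightarrow> complex" where
  "gb p N k = (if k \<le> N then qpoch p p N / (qpoch p p k * qpoch p p (N-k)) else 0)"

lemma gb_pascal:
  assumes p: "norm p < 1"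
  shows "gb p (Suc N) (Suc k) = gb p N (Suc k) + p^(N - k) * gb p N k"
proof (cases "Suc k \<le> N")
  case True
  then obtain d where N: "N = k + 1 + d" by (metis add.commute add_Suc_right le_Suc_ex plus_1_eq_Suc)
  have nz: "\<And>n. qpoch p p n \<noteq> 0" using FF_nz[OF p] .
  have nz1: "1 - p ^ Suc n \<noteq> 0" for n using nz[of "Suc n"] by (simp add: FF_Suc)
  have e1: "Suc N - Suc k = Suc d" "N - Suc k = d" "N - k = Suc d" using N by auto
  have "gb p (Suc N) (Suc k) = qpoch p p (Suc N) / (qpoch p p (Suc k) * qpoch p p (Suc d))"
    using True e1 by (simp add: gb_def)
  also have "\<dots> = qpoch p p N * (1 - p^Suc N) / (qpoch p p k * (1 - p^Suc k) * (qpoch p p d * (1 - p^Suc d)))"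
    by (simp add: FF_Suc)
  also have "\<dots> = qpoch p p N / (qpoch p p k * (1 - p^Suc k) * qpoch p p d)
      + p^(Suc d) * (qpoch p p N / (qpoch p p k * (qpoch p p d * (1 - p^Suc d))))"
  proof -
    have "Suc N = Suc d + Suc k" using N by simp
    then have pSN: "p ^ Suc N = p^Suc d * p^Suc k" by (simp only: power_add)
    have alg:  "\<And>A B C x y::complex. B \<noteq> 0 \<Longrightarrow> C \<noteq> 0 \<Longrightarrow> 1 - x \<noteq> 0 \<Longrightarrow> 1 - y \<noteq> 0 \<Longrightarrow>
      A * (1 - y*x) / (B*(1-x)*(C*(1-y))) = A/(B*(1-x)*C) + y*(A/(B*(C*(1-y))))"
    proof -
      fix A B C x y :: complex
      assume h: "B \<noteq> 0" "C \<noteq> 0" "1 - x \<noteq> 0" "1 - y \<noteq> 0"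
      define u where "u = 1 - x"
      define v where "v = 1 - y"
      have xu: "x = 1 - u" "y = 1 - v" by (auto simp: u_def v_def)
      have "u \<noteq> 0" "v \<noteq> 0" using h by (auto simp: u_def v_def)
      then show "A * (1 - y*x) / (B*(1-x)*(C*(1-y))) = A/(B*(1-x)*C) + y*(A/(B*(C*(1-y))))"
        unfolding xu using h by (simp add: field_simps)
    qed
    show ?thesis unfolding pSN by (rule alg) (use nz nz1 in auto)
  qed
  also have "\<dots> = gb p N (Suc k) + p^(N - k) * gb p N k"
    using True e1 by (simp add: gb_def FF_Suc)
  finally show ?thesis .
next
  case False
  then show ?thesis
  proof (cases "k = N")
    case True then show ?thesis by (simp add: gb_def FF_nz[OF p])
  next
    case False
    with \<open>\<not> Suc k \<le> N\<close> show ?thesis by (simp add: gb_def)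
  qed
qed

lemma gb_0: "norm p < 1 \<Longrightarrow> gb p N 0 = 1"
  by (simp add: gb_def FF_nz)

lemma gb_gt[simp]: "N < k \<Longrightarrow> gb p N k = 0"
  by (simp add: gb_def)

lemma tstep:
  assumes "k \<le> N"
  shows "(q^2)^(N-k) * ((-1)^(Suc k) * q^(Suc k * (Suc k - 1)) * y^(Suc k))
       = - (y * q^(2*N)) * ((-1)^k * q^(k*(k-1)) * (y::complex)^k)"
proof -
  obtain e where N: "N = k + e" using assms le_Suc_ex by blast
  have ex: "2*e + Suc k * k = 2*N + k*(k-1)" unfolding N by (cases k) (auto simp: algebra_simps)
  have "(q^2)^(N-k) * q^(Suc k * (Suc k - 1)) = q^(2*N) * q^(k*(k-1))"
    using ex unfolding N by (simp flip: power_mult power_add add: ac_simps)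
  then show ?thesis by (simp add: algebra_simps)
qed

lemma qbin_thm:
  assumes q: "norm q < 1"
  shows "(\<Sum>k\<le>N. gb (q^2) N k * ((-1)^k * q^(k*(k-1)) * y^k)) = (\<Prod>i<N. 1 - y*q^(2*i))"
proof (induction N)
  case 0
  have p: "norm (q^2) < 1" using q by (simp add: norm_power power_less_one_iff)
  then show ?case by (simp add: gb_0)
next
  case (Suc N)
  define t where "t k = (-1)^k * q^(k*(k-1)) * (y::complex)^k" for k
  have p: "norm (q^2) < 1" using q by (simp add: norm_power power_less_one_iff)
  have ts: "(q^2)^(N-k) * t (Suc k) = -(y*q^(2*N)) * t k" if "k \<le> N" for k
    unfolding t_def by (rule tstep[OF that])
  have "(\<Sum>k\<le>Suc N. gb (q^2) (Suc N) k * t k)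
      = t 0 + (\<Sum>k\<le>N. gb (q^2) (Suc N) (Suc k) * t (Suc k))"
    by (subst sum.atMost_Suc_shift) (simp add: gb_0[OF p])
  also have "\<dots> = t 0 + (\<Sum>k\<le>N. gb (q^2) N (Suc k) * t (Suc k)
      + gb (q^2) N k * ((q^2)^(N-k) * t (Suc k)))"
    by (rule arg_cong[where f="\<lambda>x. t 0 + x"], rule sum.cong) (auto simp: gb_pascal[OF p] algebra_simps)
  also have "\<dots> = t 0 + (\<Sum>k\<le>N. gb (q^2) N (Suc k) * t (Suc k))
      + (\<Sum>k\<le>N. gb (q^2) N k * ((q^2)^(N-k) * t (Suc k)))"
    by (simp add: sum.distrib)
  also have "t 0 + (\<Sum>k\<le>N. gb (q^2) N (Suc k) * t (Suc k)) = (\<Sum>k\<le>Suc N. gb (q^2) N k * t k)"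
    by (subst sum.atMost_Suc_shift) (simp add: gb_0[OF p])
  also have "\<dots> = (\<Sum>k\<le>N. gb (q^2) N k * t k)" by simp
  also have "(\<Sum>k\<le>N. gb (q^2) N k * ((q^2)^(N-k) * t (Suc k))) = (\<Sum>k\<le>N. - (y * q^(2*N)) * (gb (q^2) N k * t k))"
    by (rule sum.cong) (auto simp: ts)
  also have "\<dots> = - (y * q^(2*N)) * (\<Sum>k\<le>N. gb (q^2) N k * t k)"
    by (simp add: sum_distrib_left)
  finally have "(\<Sum>k\<le>Suc N. gb (q^2) (Suc N) k * t k) = (1 - y * q^(2*N)) * (\<Sum>k\<le>N. gb (q^2) N k * t k)"
    by (simp add: algebra_simps)
  then show ?case using Suc unfolding t_def by (simp add: algebra_simps)
qed

definition Ssum :: "complex \<Rightarrow> nat \<Rightarrow> complex \<Rightarrow> complex" where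
  "Ssum q L z = (\<Sum>k\<le>2*L+1. gb (q^2) (2*L+1) k * ((-1)^k * q^((k-L)^2 + (L-k)^2) * z^k))"

lemma prod_split: "(\<Prod>i<a+b. f i) = (\<Prod>i<a. f i) * (\<Prod>m<b. f (a+m))" for f :: "nat \<Rightarrow> complex"
  by (induction b) (auto simp: algebra_simps)

lemma prod_odd: "(\<Prod>m<L. q^(2*m+1)) = (q::complex)^(L*L)"
proof (induction L)
  case 0 then show ?case by simp
next
  case (Suc L)
  have "L*L + (2*L+1) = Suc L * Suc L" by simp
  then have "q^(L*L) * q^(2*L+1) = q^(Suc L * Suc L)" by (metis power_add)
  then show ?case using Suc by simp
qed

lemma exps1: "(k-L)^2+(L-k)^2 + 2*L*k = L*L + k*(k::nat)"
proof (cases "k \<le> L")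
  case True then obtain d where "L = k + d" using le_Suc_ex by blast
  then show ?thesis by (simp add: power2_eq_square algebra_simps)
next
  case False then obtain d where "k = L + d" using le_Suc_ex[of L k] by auto
  then show ?thesis by (simp add: power2_eq_square algebra_simps)
qed

lemma exps2: "k*(k-1) + k = k*(k::nat)"
  by (cases k) auto

lemma Ssum_nz:
  assumes q: "norm q < 1" and q0: "q \<noteq> 0"
  shows "Ssum q L z = (\<Prod>m<L+1. 1 - z*q^(2*m+1)) * (\<Prod>m<L. q^(2*m+1) - z)"
proof -
  define y where "y = z*q/q^(2*L)"
  have tm: "q^(L*L) * (q^(k*(k-1)) * y^k) = q^((k-L)^2 + (L-k)^2) * z^k" for k
  proof -
    have "q^(L*L) * (q^(k*(k-1)) * y^k) = (q^(L*L) * q^(k*(k-1)) * q^k) * z^k / q^(2*L*k)"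
    proof -
      have yk: "y^k = z^k * q^k / q^(2*L*k)"
        by (simp add: y_def power_divide power_mult_distrib power_mult)
      show ?thesis using q0 by (simp add: yk field_simps)
    qed
    also have "q^(L*L) * q^(k*(k-1)) * q^k = q^((k-L)^2 + (L-k)^2) * q^(2*L*k)"
    proof -
      have "L*L + k*(k-1) + k = ((k-L)^2 + (L-k)^2) + 2*L*k" using exps1[of k L] exps2[of k] by linarith
      then show ?thesis by (metis power_add)
    qed
    finally show ?thesis using q0 by simp
  qed
  have "Ssum q L z = q^(L*L) * (\<Sum>k\<le>2*L+1. gb (q^2) (2*L+1) k * ((-1)^k * q^(k*(k-1)) * y^k))"
    unfolding Ssum_def sum_distrib_left
  proof (rule sum.cong[OF refl])
    fix k
    have "q^(L*L) * (gb (q^2) (2*L+1) k * ((-1)^k * q^(k*(k-1)) * y^k))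
        = gb (q^2) (2*L+1) k * ((-1)^k * (q^(L*L) * (q^(k*(k-1)) * y^k)))" by (simp only: mult_ac)
    also have "\<dots> = gb (q^2) (2*L+1) k * ((-1)^k * q^((k-L)^2 + (L-k)^2) * z^k)"
      by (simp only: tm mult.assoc)
    finally show "gb (q^2) (2*L+1) k * ((-1)^k * q^((k-L)^2 + (L-k)^2) * z^k)
      = q^(L*L) * (gb (q^2) (2*L+1) k * ((-1)^k * q^(k*(k-1)) * y^k))" by (rule sym)
  qed
  also have "\<dots> = q^(L*L) * (\<Prod>i<2*L+1. 1 - y*q^(2*i))"
    by (simp only: qbin_thm[OF q])
  also have "(\<Prod>i<2*L+1. 1 - y*q^(2*i)) = (\<Prod>i<L. 1 - y*q^(2*i)) * (\<Prod>m<L+1. 1 - y*q^(2*(L+m)))"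
    using prod_split[of "\<lambda>i. 1 - y*q^(2*i)" L "L+1"] by (simp add: mult_2)
  also have "(\<Prod>m<L+1. 1 - y*q^(2*(L+m))) = (\<Prod>m<L+1. 1 - z*q^(2*m+1))"
  proof (rule prod.cong)
    fix m
    have "y*q^(2*(L+m)) = z*q*(q^(2*L)*q^(2*m))/q^(2*L)"
      by (simp add: y_def power_add distrib_left)
    also have "\<dots> = z*q^(2*m+1)" using q0 by simp
    finally show "1 - y*q^(2*(L+m)) = 1 - z*q^(2*m+1)" by simp
  qed simp
  also have "(\<Prod>i<L. 1 - y*q^(2*i)) = (\<Prod>m<L. 1 - y*q^(2*(L - Suc m)))"
    by (rule prod.nat_diff_reindex[symmetric])
  also have "\<dots> = (\<Prod>m<L. 1 - z/q^(2*m+1))"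
  proof (rule prod.cong)
    fix m assume "m \<in> {..<L}"
    then have "2*L = 2*(L - Suc m) + (2*m+1) + 1" by auto
    then have e: "q^(2*L) = q^(2*(L - Suc m)) * q^(2*m+1) * q" by (metis power_add power_one_right)
    have "y*q^(2*(L - Suc m)) = z*q*q^(2*(L - Suc m)) / (q^(2*(L - Suc m)) * q^(2*m+1) * q)"
      by (simp add: y_def e)
    also have "\<dots> = z/q^(2*m+1)" using q0 by (simp add: field_simps)
    finally show "1 - y*q^(2*(L - Suc m)) = 1 - z/q^(2*m+1)" by simp
  qed simp
  finally have "Ssum q L z = (q^(L*L) * (\<Prod>m<L. 1 - z/q^(2*m+1))) * (\<Prod>m<L+1. 1 - z*q^(2*m+1))"
    by (simp add: algebra_simps)
  also have "q^(L*L) * (\<Prod>m<L. 1 - z/q^(2*m+1)) = (\<Prod>m<L. q^(2*m+1) * (1 - z/q^(2*m+1)))"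
    by (simp only: prod.distrib prod_odd)
  also have "\<dots> = (\<Prod>m<L. q^(2*m+1) - z)"
    using q0 by (intro prod.cong) (auto simp: field_simps)
  finally show ?thesis by (simp add: algebra_simps)
qed

lemma qpoch_zero: "qpoch 0 0 n = 1"
  by (simp add: qpoch_def)

lemma Ssum_formula:
  assumes q: "norm q < 1"
  shows "Ssum q L z = (\<Prod>m<L+1. 1 - z*q^(2*m+1)) * (\<Prod>m<L. q^(2*m+1) - z)"
proof (cases "q = 0")
  case False then show ?thesis using Ssum_nz[OF q] by simp
next
  case True
  have gb0: "gb 0 N k = (if k \<le> N then 1 else 0)" for k N
    by (simp add: gb_def qpoch_zero)
  have "Ssum q L z = (\<Sum>k\<le>2*L+1. if L = k then (-1)^k * z^k else 0)"
    unfolding Ssum_def True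
    by (rule sum.cong) (auto simp: gb0 power2_eq_square)
  also have "\<dots> = (-1)^L * z^L" by simp
  also have "\<dots> = (\<Prod>m<L+1. 1 - z*q^(2*m+1)) * (\<Prod>m<L. q^(2*m+1) - z)"
    using True by (simp add: power_minus')
  finally show ?thesis .
qed

lemma sum_pair: "(\<Sum>k\<le>2*L+1. g k) = (\<Sum>r\<le>L. g (L+1+r) + g (L-r))" for g :: "nat \<Rightarrow> complex"
proof -
  have "(\<Sum>k\<le>2*L+1. g k) = (\<Sum>k<(L+1)+(L+1). g k)"
    by (rule sum.cong) auto
  also have "\<dots> = (\<Sum>k<L+1. g k) + (\<Sum>m<L+1. g (L+1+m))"
  proof -
    have "\<And>b. (\<Sum>k<(L+1)+b. g k) = (\<Sum>k<L+1. g k) + (\<Sum>m<b. g (L+1+m))"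
      subgoal for b by (induction b) (auto simp: algebra_simps) done
    then show ?thesis .
  qed
  also have "(\<Sum>k<L+1. g k) = (\<Sum>m<L+1. g (L+1 - Suc m))"
    by (rule sum.nat_diff_reindex[symmetric])
  finally show ?thesis
    by (simp add: sum.distrib lessThan_Suc_atMost[symmetric] algebra_simps)
qed

definition om :: complex where "om = Complex (-1/2) (sqrt 3 / 2)"

lemma om_eq: "om^2 + om + 1 = 0"
  by (simp add: om_def complex_eq_iff power2_eq_square)

lemma om3: "om^3 = 1"
proof -
  have "om^3 - 1 = (om - 1) * (om^2 + om + 1)" by (simp add: algebra_simps power2_eq_square power3_eq_cube)
  then show ?thesis using om_eq by simp
qed

lemma om_mod: "om^n = om^(n mod 3)"
proof -
  have "om^n = (om^3)^(n div 3) * om^(n mod 3)"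
    by (metis div_mult_mod_eq power_add power_mult mult.commute)
  then show ?thesis by (simp add: om3)
qed

lemma om_diff: "om - om^2 \<noteq> 0"
  by (simp add: om_def complex_eq_iff power2_eq_square)

lemma om4: "om^4 = om"
proof -
  have "om^4 = om^3 * om" by (simp add: power_Suc2[symmetric] del: power_Suc2)
  then show ?thesis by (simp add: om3)
qed

lemma om_chi:
  assumes "int x mod 3 = m mod 3" "int y mod 3 = (2*m) mod 3"
  shows "om^x - om^y = of_int (leg3 m) * (om - om^2)"
proof -
  have "int (x mod 3) = m mod 3" using assms(1) by (simp add: of_nat_mod)
  then have hx: "x mod 3 = nat (m mod 3)" by linarith
  have "int (y mod 3) = (2*m) mod 3" using assms(2) by (simp add: of_nat_mod)
  then have hy: "y mod 3 = nat ((2*m) mod 3)" by linarith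
  have ox: "om^x = om^(nat (m mod 3))" using om_mod[of x] hx by simp
  have oy: "om^y = om^(nat ((2*m) mod 3))" using om_mod[of y] hy by simp
  have "m mod 3 = 0 \<or> m mod 3 = 1 \<or> m mod 3 = 2" by auto
  moreover
  { assume a: "m mod 3 = 0" then have "(2*m) mod 3 = 0" by (simp add: mod_mult_right_eq[symmetric])
    then have ?thesis unfolding ox oy using a by (simp add: leg3_def) }
  moreover
  { assume a: "m mod 3 = 1" then have "(2*m) mod 3 = 2" by (simp add: mod_mult_right_eq[symmetric])
    then have ?thesis unfolding ox oy using a by (simp add: leg3_def) }
  moreover
  { assume a: "m mod 3 = 2" then have "(2*m) mod 3 = 1" by (simp add: mod_mult_right_eq[symmetric])
    then have ?thesis unfolding ox oy using a om4 by (simp add: leg3_def) }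
  ultimately show ?thesis by argo
qed

abbreviation FQ :: "complex \<Rightarrow> nat \<Rightarrow> complex" where "FQ q n \<equiv> qpoch (q^2) (q^2) n"

definition acoef :: "complex \<Rightarrow> nat \<Rightarrow> complex" where
  "acoef q r = (-1)^r * of_int (leg3 (1 - int r)) * q^(r*r) * (1 + q^(2*r+1))"

lemma Ssum_pair:
  assumes q: "norm q < 1"
  shows "Ssum q L z = (\<Sum>r\<le>L. FQ q (2*L+1) / (FQ q (L-r) * FQ q (L+1+r)) *
     ((-1)^(L+1+r) * q^((r+1)^2) * z^(L+1+r) + (-1)^(L-r) * q^(r^2) * z^(L-r)))"
  unfolding Ssum_def sum_pair
proof (rule sum.cong[OF refl])
  fix r assume r: "r \<in> {..L}"
  have g1: "gb (q^2) (2*L+1) (L+1+r) = FQ q (2*L+1) / (FQ q (L-r) * FQ q (L+1+r))"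
    using r by (auto simp: gb_def)
  have g2: "gb (q^2) (2*L+1) (L-r) = FQ q (2*L+1) / (FQ q (L-r) * FQ q (L+1+r))"
    using r by (auto simp: gb_def)
  have e1: "(L+1+r - L)^2 + (L - (L+1+r))^2 = (r+1)^2" by simp
  have e2: "(L-r - L)^2 + (L - (L-r))^2 = r^2" using r by simp
  show "gb (q^2) (2*L+1) (L+1+r) * ((-1)^(L+1+r) * q^((L+1+r - L)^2 + (L - (L+1+r))^2) * z^(L+1+r))
      + gb (q^2) (2*L+1) (L-r) * ((-1)^(L-r) * q^((L-r - L)^2 + (L - (L-r))^2) * z^(L-r))
    = FQ q (2*L+1) / (FQ q (L-r) * FQ q (L+1+r)) *
     ((-1)^(L+1+r) * q^((r+1)^2) * z^(L+1+r) + (-1)^(L-r) * q^(r^2) * z^(L-r))"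
    unfolding g1 g2 e1 e2 by (simp only: distrib_left)
qed

lemma om_term:
  assumes r: "r \<le> L"
  shows "om^(2*L+1) * (c1 * om^(L+1+r) + c2 * om^(L-r)) - om^(L+2) * (c1 * (om^2)^(L+1+r) + c2 * (om^2)^(L-r))
    = (c2 - c1) * of_int (leg3 (1 - int r)) * (om - om^2)"
proof -
  have p1: "om^(2*L+1) * om^(L+1+r) = om^(3*L+2+r)" by (simp flip: power_add)
  have p2: "om^(L+2) * (om^2)^(L+1+r) = om^(3*L+4+2*r)"
  proof -
    have "L+2 + 2*(L+1+r) = 3*L+4+2*r" by simp
    then show ?thesis by (metis power_add power_mult)
  qed
  have p3: "om^(2*L+1) * om^(L-r) = om^(3*L+1-r)"
  proof -
    have "2*L+1 + (L-r) = 3*L+1-r" using r by simp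
    then show ?thesis by (metis power_add)
  qed
  have p4: "om^(L+2) * (om^2)^(L-r) = om^(3*L+2-2*r)"
  proof -
    have "L+2 + 2*(L-r) = 3*L+2-2*r" using r by simp
    then show ?thesis by (metis power_add power_mult)
  qed
  have x1: "om^(3*L+1-r) - om^(3*L+2-2*r) = of_int (leg3 (1 - int r)) * (om - om^2)"
  proof (rule om_chi)
    have "int (3*L+1-r) = 3 * int L + (1 - int r)" using r by simp
    then show "int (3*L+1-r) mod 3 = (1 - int r) mod 3" by simp
    have "int (3*L+2-2*r) = 3 * int L + 2 * (1 - int r)" using r by simp
    then show "int (3*L+2-2*r) mod 3 = (2 * (1 - int r)) mod 3" by simp
  qed
  have x2: "om^(3*L+4+2*r) - om^(3*L+2+r) = of_int (leg3 (1 - int r)) * (om - om^2)"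
  proof (rule om_chi)
    have "int (3*L+4+2*r) = 3 * (int L + 1 + int r) + (1 - int r)" by simp
    then show "int (3*L+4+2*r) mod 3 = (1 - int r) mod 3" by presburger
    have "int (3*L+2+r) = 3 * (int L + int r) + 2 * (1 - int r)" by simp
    then show "int (3*L+2+r) mod 3 = (2 * (1 - int r)) mod 3" by presburger
  qed
  have "om^(2*L+1) * (c1 * om^(L+1+r) + c2 * om^(L-r)) - om^(L+2) * (c1 * (om^2)^(L+1+r) + c2 * (om^2)^(L-r))
     = c2 * (om^(2*L+1) * om^(L-r) - om^(L+2) * (om^2)^(L-r)) - c1 * (om^(L+2) * (om^2)^(L+1+r) - om^(2*L+1) * om^(L+1+r))"
    by (simp add: algebra_simps)
  also have "\<dots> = c2 * (om^(3*L+1-r) - om^(3*L+2-2*r)) - c1 * (om^(3*L+4+2*r) - om^(3*L+2+r))"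
    by (simp only: p1 p2 p3 p4)
  also have "\<dots> = (c2 - c1) * of_int (leg3 (1 - int r)) * (om - om^2)"
    by (simp only: x1 x2) (simp add: algebra_simps)
  finally show ?thesis .
qed

definition beta0 :: "complex \<Rightarrow> nat \<Rightarrow> complex" where
  "beta0 q L = qpoch (q^3) (q^6) L / (FQ q (2*L) * qpoch q (q^2) (L+1))"

lemma om_sum: "om^2 + om = -1" using om_eq by (simp add: algebra_simps eq_neg_iff_add_eq_0)

lemma cubic: "(1 - x) * ((1 - om*x) * (1 - om^2*x)) = 1 - x^3"
proof -
  have "(1 - om*x) * (1 - om^2*x) = 1 - (om^2 + om)*x + om^3 * x^2"
    by (simp add: algebra_simps power2_eq_square power3_eq_cube)
  also have "\<dots> = 1 + x + x^2" by (simp add: om_sum om3)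
  finally show ?thesis by (simp add: algebra_simps power2_eq_square power3_eq_cube)
qed

lemma prod_om1: "(\<Prod>m<L. x m - om) = (-om)^L * (\<Prod>m<L. 1 - om^2 * x m)"
proof -
  have "(\<Prod>m<L. x m - om) = (\<Prod>m<L. (-om) * (1 - om^2 * x m))"
  proof (rule prod.cong[OF refl])
    fix m
    have "(-om) * (1 - om^2 * x m) = om^3 * x m - om" by (simp add: algebra_simps power2_eq_square power3_eq_cube)
    then show "x m - om = (-om) * (1 - om^2 * x m)" by (simp add: om3)
  qed
  then show ?thesis by (simp only: prod.distrib prod_constant card_lessThan)
qed

lemma prod_om2: "(\<Prod>m<L. x m - om^2) = (- (om^2))^L * (\<Prod>m<L. 1 - om * x m)"
proof -
  have "(\<Prod>m<L. x m - om^2) = (\<Prod>m<L. (- (om^2)) * (1 - om * x m))"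
  proof (rule prod.cong[OF refl])
    fix m
    have "(- (om^2)) * (1 - om * x m) = om^3 * x m - om^2" by (simp add: algebra_simps power2_eq_square power3_eq_cube)
    then show "x m - om^2 = (- (om^2)) * (1 - om * x m)" by (simp add: om3)
  qed
  then show ?thesis by (simp only: prod.distrib prod_constant card_lessThan)
qed

lemma om3L: "om^(3*L) = 1"
  by (simp add: power_mult om3)

lemma base_identity:
  assumes q: "norm q < 1"
  shows "beta0 q L = (\<Sum>r\<le>L. acoef q r / (FQ q (L-r) * FQ q (L+r+1)))"
proof -
  have p: "norm (q^2) < 1" using q by (simp add: norm_power power_less_one_iff)
  define x where "x m = q^(2*m+1)" for m
  define A where "A = (\<Prod>m<L. 1 - om * x m)"
  define B where "B = (\<Prod>m<L. 1 - om^2 * x m)"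
  define G where "G r = FQ q (2*L+1) / (FQ q (L-r) * FQ q (L+1+r))" for r
  define c1 where "c1 r = (-1)^(L+1+r) * q^((r+1)^2)" for r
  define c2 where "c2 r = (-1)^(L-r) * q^(r^2)" for r
  define E where "E = om^(2*L+1) * Ssum q L om - om^(L+2) * Ssum q L (om^2)"
  have "E = (\<Sum>r\<le>L. G r * (om^(2*L+1) * (c1 r * om^(L+1+r) + c2 r * om^(L-r))
        - om^(L+2) * (c1 r * (om^2)^(L+1+r) + c2 r * (om^2)^(L-r))))"
    unfolding E_def Ssum_pair[OF q] G_def[symmetric] sum_distrib_left sum_subtractf[symmetric]
    by (rule sum.cong) (auto simp: c1_def c2_def algebra_simps)
  also have "\<dots> = (\<Sum>r\<le>L. G r * ((c2 r - c1 r) * of_int (leg3 (1 - int r)) * (om - om^2)))"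
    by (rule sum.cong[OF refl], subst om_term, auto)
  also have "\<dots> = (\<Sum>r\<le>L. G r * ((-1)^L * (om - om^2) * acoef q r))"
  proof (rule sum.cong[OF refl])
    fix r assume r: "r \<in> {..L}"
    have s1: "(-1::complex)^(L-r) = (-1)^(L+r)"
    proof -
      have "L + r = (L - r) + 2*r" using r by auto
      then have "(-1::complex)^(L+r) = (-1)^(L-r) * ((-1)^2)^r" by (metis power_add power_mult)
      then show ?thesis by simp
    qed
    have "c2 r - c1 r = (-1)^L * (-1)^r * (q^(r*r) * (1 + q^(2*r+1)))"
    proof -
      have "(r+1)^2 = r*r + (2*r+1)" by (simp add: power2_eq_square)
      then have "q^((r+1)^2) = q^(r*r) * q^(2*r+1)" by (metis power_add)
      then show ?thesis unfolding c1_def c2_def s1 by (simp add: power_add algebra_simps power2_eq_square)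
    qed
    then show "G r * ((c2 r - c1 r) * of_int (leg3 (1 - int r)) * (om - om^2)) = G r * ((-1)^L * (om - om^2) * acoef q r)"
      by (simp add: acoef_def algebra_simps)
  qed
  also have "\<dots> = (-1)^L * (om - om^2) * (FQ q (2*L+1) * (\<Sum>r\<le>L. acoef q r / (FQ q (L-r) * FQ q (L+r+1))))"
    unfolding sum_distrib_left
    by (rule sum.cong) (auto simp: G_def algebra_simps)
  finally have E1: "E = (-1)^L * (om - om^2) * (FQ q (2*L+1) * (\<Sum>r\<le>L. acoef q r / (FQ q (L-r) * FQ q (L+r+1))))" .
  have S1: "Ssum q L om = A * (1 - om * x L) * ((-om)^L * B)"
    unfolding Ssum_formula[OF q] A_def B_def
    using prod_om1[of x L] by (simp add: x_def)
  have S2: "Ssum q L (om^2) = B * (1 - om^2 * x L) * ((- (om^2))^L * A)"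
    unfolding Ssum_formula[OF q] A_def B_def
    using prod_om2[of x L] by (simp add: x_def)
  have h1: "om^(2*L+1) * (-om)^L = (-1)^L * om"
  proof -
    have "2*L+1+L = 3*L+1" by simp
    then have "om^(2*L+1) * om^L = om^(3*L) * om" by (metis power_add power_one_right)
    then have "om^(2*L+1) * om^L = om" by (simp only: om3L mult_1)
    then show ?thesis by (simp add: power_minus' algebra_simps)
  qed
  have h2: "om^(L+2) * (- (om^2))^L = (-1)^L * om^2"
  proof -
    have "L+2+2*L = 3*L+2" by simp
    then have "om^(L+2) * (om^2)^L = om^(3*L) * om^2" by (metis power_add power_mult)
    then have "om^(L+2) * (om^2)^L = om^2" by (simp only: om3L mult_1)
    then show ?thesis by (simp add: power_minus' algebra_simps)
  qed
  have "E = (om^(2*L+1) * (-om)^L) * (A * B * (1 - om * x L)) - (om^(L+2) * (- (om^2))^L) * (A * B * (1 - om^2 * x L))"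
    unfolding E_def S1 S2 by (simp only: mult_ac)
  also have "\<dots> = (-1)^L * (A * B) * (om * (1 - om * x L) - om^2 * (1 - om^2 * x L))"
    unfolding h1 h2 by (simp add: algebra_simps)
  also have "om * (1 - om * x L) - om^2 * (1 - om^2 * x L) = (om - om^2) * (1 + x L)"
  proof -
    have "om * (om * om) = 1" using om3 by (simp add: power3_eq_cube mult.assoc)
    then show ?thesis by (simp add: algebra_simps power2_eq_square)
  qed
  finally have E2: "E = (-1)^L * (om - om^2) * ((1 + x L) * (A * B))" by (simp add: algebra_simps)
  have nzs: "(-1)^L * (om - om^2) \<noteq> 0" using om_diff by simp
  have key: "FQ q (2*L+1) * (\<Sum>r\<le>L. acoef q r / (FQ q (L-r) * FQ q (L+r+1))) = (1 + x L) * (A * B)"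
  proof -
    from E1[symmetric] E2 have "(-1)^L * (om - om^2) * (FQ q (2*L+1) * (\<Sum>r\<le>L. acoef q r / (FQ q (L-r) * FQ q (L+r+1))))
       = (-1)^L * (om - om^2) * ((1 + x L) * (A * B))" by (rule trans)
    with nzs show ?thesis by (rule mult_left_cancel[THEN iffD1])
  qed
  have xn: "norm (x m) < 1" for m
    unfolding x_def norm_power using q by (simp add: power_less_one_iff del: power_Suc)
  have x1: "1 - x m \<noteq> 0" for m using xn[of m] by auto
  have qq: "qpoch q (q^2) L \<noteq> 0" using q by (intro qpoch_nz) (auto simp: norm_power power_le_one)
  have qx: "qpoch q (q^2) L = (\<Prod>m<L. 1 - x m)"
    unfolding qpoch_def x_def by (rule prod.cong) (auto simp: power_mult power_add)
  have q36: "qpoch (q^3) (q^6) L = (\<Prod>m<L. 1 - (x m)^3)"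
    unfolding qpoch_def x_def
  proof (rule prod.cong[OF refl])
    fix m
    have "(q^(2*m+1))^3 = q^3 * (q^6)^m" by (simp flip: power_mult power_add add: algebra_simps)
    then show "1 - q^3 * (q^6)^m = 1 - (q^(2*m+1))^3" by simp
  qed
  have ABq: "A * B * qpoch q (q^2) L = qpoch (q^3) (q^6) L"
    unfolding q36 qx A_def B_def prod.distrib[symmetric]
    by (rule prod.cong) (auto simp: cubic[symmetric] algebra_simps)
  have qL1: "qpoch q (q^2) (L+1) = qpoch q (q^2) L * (1 - x L)"
    by (simp add: qpoch_Suc x_def power_mult power_add)
  have F21: "FQ q (2*L+1) = FQ q (2*L) * ((1 - x L) * (1 + x L))"
  proof -
    have "(q^2)^Suc (2*L) = (x L)^2" unfolding x_def by (simp flip: power_mult add: algebra_simps)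
    then show ?thesis by (simp add: FF_Suc power2_eq_square algebra_simps)
  qed
  have F2nz: "FQ q (2*L) \<noteq> 0" using FF_nz[OF p] .
  have "beta0 q L * FQ q (2*L+1) = (1 + x L) * (A * B)"
    unfolding beta0_def qL1 F21 ABq[symmetric] using F2nz qq x1[of L]
    by (simp add: field_simps)
  then have "beta0 q L * FQ q (2*L+1) = FQ q (2*L+1) * (\<Sum>r\<le>L. acoef q r / (FQ q (L-r) * FQ q (L+r+1)))"
    using key by simp
  then show ?thesis using FF_nz[OF p, of "2*L+1"] by (simp add: mult.commute)
qed

lemma g_identity:
  assumes p: "norm p < 1"
  shows "(\<Sum>m\<le>N. p^(m*m + b*m) * gb p N m / qpoch p p (m+b)) = 1 / qpoch p p (N+b)"
proof (induction N arbitrary: b)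
  case 0
  then show ?case by (simp add: gb_0[OF p])
next
  case (Suc N)
  define t where "t m = p^(m*m + b*m) / qpoch p p (m+b)" for m
  have "(\<Sum>m\<le>Suc N. p^(m*m + b*m) * gb p (Suc N) m / qpoch p p (m+b)) = (\<Sum>m\<le>Suc N. gb p (Suc N) m * t m)"
    by (rule sum.cong[OF refl]) (simp add: t_def mult.commute)
  also have "\<dots> = t 0 + (\<Sum>m\<le>N. gb p (Suc N) (Suc m) * t (Suc m))"
    by (subst sum.atMost_Suc_shift) (simp add: gb_0[OF p])
  also have "\<dots> = t 0 + (\<Sum>m\<le>N. gb p N (Suc m) * t (Suc m) + gb p N m * (p^(N-m) * t (Suc m)))"
    by (rule arg_cong[where f="\<lambda>x. t 0 + x"], rule sum.cong) (auto simp: gb_pascal[OF p] algebra_simps)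
  also have "\<dots> = (t 0 + (\<Sum>m\<le>N. gb p N (Suc m) * t (Suc m))) + (\<Sum>m\<le>N. gb p N m * (p^(N-m) * t (Suc m)))"
    by (simp add: sum.distrib)
  also have "t 0 + (\<Sum>m\<le>N. gb p N (Suc m) * t (Suc m)) = (\<Sum>m\<le>Suc N. gb p N m * t m)"
    by (subst sum.atMost_Suc_shift) (simp add: gb_0[OF p])
  also have "\<dots> = (\<Sum>m\<le>N. gb p N m * t m)" by simp
  also have "\<dots> = 1 / qpoch p p (N+b)"
    using Suc[of b] by (simp add: t_def algebra_simps)
  also have "(\<Sum>m\<le>N. gb p N m * (p^(N-m) * t (Suc m))) = p^(N+b+1) * (\<Sum>m\<le>N. p^(m*m + (b+1)*m) * gb p N m / qpoch p p (m+(b+1)))"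
    unfolding sum_distrib_left
  proof (rule sum.cong[OF refl])
    fix m assume m: "m \<in> {..N}"
    have e: "Suc m * Suc m + b * Suc m + (N - m) = (N+b+1) + (m*m + (b+1)*m)"
      using m by (simp add: algebra_simps)
    have "p^(N-m) * t (Suc m) = p^(Suc m * Suc m + b * Suc m + (N - m)) / qpoch p p (m+(b+1))"
      by (simp add: t_def power_add)
    also have "\<dots> = p^(N+b+1) * p^(m*m + (b+1)*m) / qpoch p p (m+(b+1))"
      by (simp only: e power_add)
    finally show "gb p N m * (p^(N-m) * t (Suc m)) = p^(N+b+1) * (p^(m*m + (b+1)*m) * gb p N m / qpoch p p (m+(b+1)))"
      by simp
  qed
  also have "\<dots> = p^(N+b+1) / qpoch p p (N+b+1)"
    using Suc[of "b+1"] by (simp add: add.assoc)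
  also have "1 / qpoch p p (N+b) + p^(N+b+1) / qpoch p p (N+b+1) = 1 / qpoch p p (Suc N + b)"
  proof -
    have nz: "qpoch p p (N+b) \<noteq> 0" "1 - p^Suc (N+b) \<noteq> 0"
      using FF_nz[OF p, of "N+b"] FF_nz[OF p, of "Suc (N+b)"] by (auto simp: FF_Suc)
    then show ?thesis by (simp add: FF_Suc field_simps)
  qed
  finally show ?case .
qed

lemma bailey_inner:
  assumes p: "norm p < 1" and r: "r \<le> L"
  shows "(\<Sum>M\<in>{r..L}. p^(M*(M+1)) / (qpoch p p (L-M) * qpoch p p (M-r) * qpoch p p (M+r+1)))
       = p^(r*(r+1)) / (qpoch p p (L-r) * qpoch p p (L+r+1))"
proof -
  define N where "N = L - r"
  define b where "b = 2*r+1"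
  have "(\<Sum>M\<in>{r..L}. p^(M*(M+1)) / (qpoch p p (L-M) * qpoch p p (M-r) * qpoch p p (M+r+1)))
      = (\<Sum>m\<in>{0..N}. p^((m+r)*((m+r)+1)) / (qpoch p p (L-(m+r)) * qpoch p p ((m+r)-r) * qpoch p p ((m+r)+r+1)))"
    using sum.shift_bounds_cl_nat_ivl[of "\<lambda>M. p^(M*(M+1)) / (qpoch p p (L-M) * qpoch p p (M-r) * qpoch p p (M+r+1))" 0 r N]
    using r by (simp add: N_def)
  also have "\<dots> = (\<Sum>m\<le>N. p^(r*(r+1)) / qpoch p p N * (p^(m*m + b*m) * gb p N m / qpoch p p (m+b)))"
  proof (rule sum.cong)
    show "{0..N} = {..N}" by auto
  next
    fix m assume m: "m \<in> {..N}"
    have e1: "L - (m+r) = N - m" "(m+r)+r+1 = m+b" "(m+r) - r = m" using m r by (auto simp: N_def b_def)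
    have e2: "(m+r)*((m+r)+1) = r*(r+1) + (m*m + b*m)" by (simp add: b_def algebra_simps)
    have nz: "qpoch p p N \<noteq> 0" "qpoch p p m \<noteq> 0" "qpoch p p (N-m) \<noteq> 0" "qpoch p p (m+b) \<noteq> 0"
      using FF_nz[OF p] by auto
    show "p^((m+r)*((m+r)+1)) / (qpoch p p (L-(m+r)) * qpoch p p ((m+r)-r) * qpoch p p ((m+r)+r+1))
        = p^(r*(r+1)) / qpoch p p N * (p^(m*m + b*m) * gb p N m / qpoch p p (m+b))"
      unfolding e1 e2 power_add using m nz by (simp add: gb_def field_simps)
  qed
  also have "\<dots> = p^(r*(r+1)) / qpoch p p N * (\<Sum>m\<le>N. p^(m*m + b*m) * gb p N m / qpoch p p (m+b))"
    by (simp add: sum_distrib_left)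
  also have "\<dots> = p^(r*(r+1)) / (qpoch p p (L-r) * qpoch p p (L+r+1))"
  proof -
    have "N + b = L + r + 1" using r by (simp add: N_def b_def)
    then show ?thesis unfolding g_identity[OF p] by (simp add: N_def)
  qed
  finally show ?thesis .
qed

lemma bailey:
  assumes p: "norm p < 1"
    and ab: "\<And>M. \<beta> M = (\<Sum>r\<le>M. \<alpha> r / (qpoch p p (M-r) * qpoch p p (M+r+1)))"
  shows "(\<Sum>M\<le>L. p^(M*(M+1)) * \<beta> M / qpoch p p (L-M))
       = (\<Sum>r\<le>L. p^(r*(r+1)) * \<alpha> r / (qpoch p p (L-r) * qpoch p p (L+r+1)))"
proof -
  define h where "h r M = \<alpha> r * (p^(M*(M+1)) / (qpoch p p (L-M) * qpoch p p (M-r) * qpoch p p (M+r+1)))" for r M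
  have "(\<Sum>M\<le>L. p^(M*(M+1)) * \<beta> M / qpoch p p (L-M)) = (\<Sum>M\<in>{..L}. \<Sum>r\<in>{r. r \<in> {..L} \<and> r \<le> M}. h r M)"
  proof (rule sum.cong[OF refl])
    fix M assume M: "M \<in> {..L}"
    have "{r. r \<in> {..L} \<and> r \<le> M} = {..M}" using M by auto
    then show "p^(M*(M+1)) * \<beta> M / qpoch p p (L-M) = (\<Sum>r\<in>{r. r \<in> {..L} \<and> r \<le> M}. h r M)"
      unfolding ab h_def by (simp add: sum_distrib_left sum_divide_distrib algebra_simps)
  qed
  also have "\<dots> = (\<Sum>r\<in>{..L}. \<Sum>M\<in>{M. M \<in> {..L} \<and> r \<le> M}. h r M)"
    by (rule sum.swap_restrict) auto
  also have "\<dots> = (\<Sum>r\<le>L. p^(r*(r+1)) * \<alpha> r / (qpoch p p (L-r) * qpoch p p (L+r+1)))"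
  proof (rule sum.cong[OF refl])
    fix r assume r: "r \<in> {..L}"
    have st: "{M. M \<in> {..L} \<and> r \<le> M} = {r..L}" by auto
    show "(\<Sum>M\<in>{M. M \<in> {..L} \<and> r \<le> M}. h r M) = p^(r*(r+1)) * \<alpha> r / (qpoch p p (L-r) * qpoch p p (L+r+1))"
    proof -
      have c: "qpoch p p (Suc (r + L)) = qpoch p p (Suc (L + r))" by (simp only: add.commute)
      show ?thesis unfolding st h_def sum_distrib_left[symmetric] using bailey_inner[OF p, of r L] r by simp
    qed
  qed
  finally show ?thesis .
qed

definition tcons :: "nat \<Rightarrow> nat \<Rightarrow> (nat \<Rightarrow> nat) \<Rightarrow> (nat \<Rightarrow> nat)" where
  "tcons v a m = (\<lambda>i. if i = 1 then a else if 2 \<le> i \<and> i \<le> v+1 then m (i-1) else 0)"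

definition ttail :: "nat \<Rightarrow> (nat \<Rightarrow> nat) \<Rightarrow> (nat \<Rightarrow> nat)" where
  "ttail v n = (\<lambda>i. if 1 \<le> i \<and> i \<le> v then n (i+1) else 0)"

lemma tcons_tuples: "tcons v a m \<in> tuples (Suc v)"
  by (auto simp: tcons_def tuples_def)

lemma ttail_tuples: "ttail v n \<in> tuples v"
  by (auto simp: ttail_def tuples_def)

lemma tcons_ttail: "n \<in> tuples (Suc v) \<Longrightarrow> tcons v (n 1) (ttail v n) = n"
  by (rule ext) (auto simp: tcons_def ttail_def tuples_def)

lemma ttail_tcons: "m \<in> tuples v \<Longrightarrow> ttail v (tcons v a m) = m"
  by (rule ext) (auto simp: tcons_def ttail_def tuples_def)

lemma tcons_1[simp]: "tcons v a m 1 = a"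
  by (simp add: tcons_def)

lemma tcons_Suc0[simp]: "tcons v a m (Suc 0) = a"
  by (simp add: tcons_def)

lemma Nsum_cons_Suc:
  assumes "1 \<le> i"
  shows "Nsum (tcons v a m) (Suc v) (Suc i) = Nsum m v i"
  unfolding Nsum_def sum.shift_bounds_cl_Suc_ivl
  by (rule sum.cong) (use assms in \<open>auto simp: tcons_def\<close>)

lemma Nsum_cons_1: "Nsum (tcons v a m) (Suc v) 1 = a + Nsum m v 1"
proof -
  have "Nsum (tcons v a m) (Suc v) 1 = tcons v a m 1 + Nsum (tcons v a m) (Suc v) (Suc 1)"
    unfolding Nsum_def by (subst sum.atLeast_Suc_atMost) auto
  then show ?thesis using Nsum_cons_Suc[of 1 v a m] by simp
qed

lemma sumN_cons:
  "(\<Sum>i=1..Suc v. g (Nsum (tcons v a m) (Suc v) i)) = g (a + Nsum m v 1) + (\<Sum>i=1..v. g (Nsum m v i))"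
proof -
  have "(\<Sum>i=1..Suc v. g (Nsum (tcons v a m) (Suc v) i)) = g (Nsum (tcons v a m) (Suc v) 1) + (\<Sum>i=Suc 1..Suc v. g (Nsum (tcons v a m) (Suc v) i))"
    by (subst sum.atLeast_Suc_atMost) auto
  also have "(\<Sum>i=Suc 1..Suc v. g (Nsum (tcons v a m) (Suc v) i)) = (\<Sum>i=1..v. g (Nsum m v i))"
    unfolding sum.shift_bounds_cl_Suc_ivl by (rule sum.cong) (auto simp: Nsum_cons_Suc)
  finally show ?thesis using Nsum_cons_1[of v a m] by simp
qed

lemma prod_cons:
  assumes "1 \<le> v"
  shows "(\<Prod>i=1..Suc v - 1. f (tcons v a m i)) = f a * (\<Prod>i=1..v-1. f (m i))"
proof -
  have "(\<Prod>i=1..Suc v - 1. f (tcons v a m i)) = f (tcons v a m 1) * (\<Prod>i=Suc 1..Suc (v-1). f (tcons v a m i))"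
    using assms by (subst prod.atLeast_Suc_atMost) (auto simp: Suc_pred)
  also have "(\<Prod>i=Suc 1..Suc (v-1). f (tcons v a m i)) = (\<Prod>i=1..v-1. f (m i))"
    unfolding prod.shift_bounds_cl_Suc_ivl by (rule prod.cong) (auto simp: tcons_def)
  finally show ?thesis by simp
qed

lemma tcons_last: "1 \<le> v \<Longrightarrow> tcons v a m (Suc v) = m v"
  by (simp add: tcons_def)

definition Wt :: "complex \<Rightarrow> nat \<Rightarrow> (nat \<Rightarrow> nat) \<Rightarrow> complex" where
  "Wt q v n = (q\<^sup>2) ^ (\<Sum>i=1..v. Nsum n v i * (Nsum n v i + 1))
            / ((\<Prod>i=1..v-1. qpoch (q\<^sup>2) (q\<^sup>2) (n i)) * qpoch (q\<^sup>2) (q\<^sup>2) (2 * n v))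
            * (qpoch (q ^ 3) (q ^ 6) (n v) / qpoch q (q\<^sup>2) (1 + n v))"

lemma Wt_cons:
  assumes v: "1 \<le> v" and q: "norm q < 1"
  shows "Wt q (Suc v) (tcons v a m) = (q^2)^((a + Nsum m v 1) * (a + Nsum m v 1 + 1)) / FQ q a * Wt q v m"
proof -
  have p: "norm (q^2) < 1" using q by (simp add: norm_power power_less_one_iff)
  have e1: "(\<Sum>i=1..Suc v. Nsum (tcons v a m) (Suc v) i * (Nsum (tcons v a m) (Suc v) i + 1))
     = (a + Nsum m v 1) * (a + Nsum m v 1 + 1) + (\<Sum>i=1..v. Nsum m v i * (Nsum m v i + 1))"
    by (rule sumN_cons)
  have e2: "(\<Prod>i=1..Suc v - 1. FQ q (tcons v a m i)) = FQ q a * (\<Prod>i=1..v-1. FQ q (m i))"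
    by (rule prod_cons[OF v])
  have nz: "FQ q a \<noteq> 0" using FF_nz[OF p] .
  show ?thesis
    unfolding Wt_def e1 e2 tcons_last[OF v] power_add using nz by (simp add: field_simps)
qed

definition Tset :: "nat \<Rightarrow> nat \<Rightarrow> (nat \<Rightarrow> nat) set" where
  "Tset v L = {n \<in> tuples v. Nsum n v 1 \<le> L}"

lemma finite_Tset: "finite (Tset v L)"
proof (rule finite_subset)
  show "Tset v L \<subseteq> {f. \<forall>x. (x \<in> {1..v} \<longrightarrow> f x \<in> {..L}) \<and> (x \<notin> {1..v} \<longrightarrow> f x = 0)}"
  proof
    fix n assume n: "n \<in> Tset v L"
    have le: "n x \<le> L" if x: "x \<in> {1..v}" for x
    proof -
      have "n x \<le> Nsum n v 1" unfolding Nsum_def by (rule member_le_sum) (use x in auto)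
      then show ?thesis using n by (auto simp: Tset_def)
    qed
    show "n \<in> {f. \<forall>x. (x \<in> {1..v} \<longrightarrow> f x \<in> {..L}) \<and> (x \<notin> {1..v} \<longrightarrow> f x = 0)}"
      using n le by (auto simp: Tset_def tuples_def)
  qed
  show "finite {f. \<forall>x. (x \<in> {1..v} \<longrightarrow> f x \<in> {..L}) \<and> (x \<notin> {1..v} \<longrightarrow> f x = (0::nat))}"
    by (rule finite_set_of_finite_funs) auto
qed

definition Xt :: "complex \<Rightarrow> nat \<Rightarrow> nat \<Rightarrow> complex" where
  "Xt q v L = (\<Sum>n\<in>Tset v L. Wt q v n / FQ q (L - Nsum n v 1))"

lemma Nsum_split: "n \<in> tuples (Suc v) \<Longrightarrow> Nsum n (Suc v) 1 = n 1 + Nsum (ttail v n) v 1"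
  using Nsum_cons_1[of v "n 1" "ttail v n"] tcons_ttail[of n v] by simp

lemma Xt_rec:
  assumes v: "1 \<le> v" and q: "norm q < 1"
  shows "Xt q (Suc v) L = (\<Sum>K\<le>L. (q^2)^(K*(K+1)) * Xt q v K / FQ q (L-K))"
proof -
  define g where "g = (\<lambda>(K::nat, m). (q^2)^(K*(K+1)) * (Wt q v m / FQ q (K - Nsum m v 1)) / FQ q (L-K))"
  have "(\<Sum>K\<le>L. (q^2)^(K*(K+1)) * Xt q v K / FQ q (L-K)) = (\<Sum>K\<le>L. \<Sum>m\<in>Tset v K. g (K, m))"
    unfolding Xt_def g_def by (simp add: sum_distrib_left sum_divide_distrib)
  also have "\<dots> = (\<Sum>x\<in>(SIGMA K:{..L}. Tset v K). g x)"
    by (subst sum.Sigma) (auto simp: finite_Tset)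
  also have "\<dots> = (\<Sum>n\<in>Tset (Suc v) L. Wt q (Suc v) n / FQ q (L - Nsum n (Suc v) 1))"
  proof (rule sum.reindex_bij_witness[where j="\<lambda>(K, m). tcons v (K - Nsum m v 1) m"
        and i="\<lambda>n. (Nsum n (Suc v) 1, ttail v n)"])
    fix a assume a: "a \<in> (SIGMA K:{..L}. Tset v K)"
    then obtain K m where am: "a = (K, m)" "K \<le> L" "m \<in> tuples v" "Nsum m v 1 \<le> K"
      by (auto simp: Tset_def)
    have N1: "Nsum (tcons v (K - Nsum m v 1) m) (Suc v) 1 = K" using am Nsum_cons_1[of v "K - Nsum m v 1" m] by simp
    show "(\<lambda>n. (Nsum n (Suc v) 1, ttail v n)) ((\<lambda>(K, m). tcons v (K - Nsum m v 1) m) a) = a"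
      using am N1 by (simp add: ttail_tcons)
    show "(\<lambda>(K, m). tcons v (K - Nsum m v 1) m) a \<in> Tset (Suc v) L"
      using am N1 by (simp add: Tset_def tcons_tuples)
    show "Wt q (Suc v) ((\<lambda>(K, m). tcons v (K - Nsum m v 1) m) a) /
          FQ q (L - Nsum ((\<lambda>(K, m). tcons v (K - Nsum m v 1) m) a) (Suc v) 1) = g a"
      using am N1 by (simp add: Wt_cons[OF v q] g_def)
  next
    fix b assume b: "b \<in> Tset (Suc v) L"
    then have bt: "b \<in> tuples (Suc v)" and bL: "Nsum b (Suc v) 1 \<le> L" by (auto simp: Tset_def)
    have sp: "Nsum b (Suc v) 1 = b 1 + Nsum (ttail v b) v 1" by (rule Nsum_split[OF bt])
    show "(\<lambda>(K, m). tcons v (K - Nsum m v 1) m) ((\<lambda>n. (Nsum n (Suc v) 1, ttail v n)) b) = b"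
      using sp tcons_ttail[OF bt] by simp
    show "(\<lambda>n. (Nsum n (Suc v) 1, ttail v n)) b \<in> (SIGMA K:{..L}. Tset v K)"
      using sp bL by (simp add: Tset_def ttail_tuples)
  qed
  finally show ?thesis unfolding Xt_def by simp
qed

definition t1 :: "nat \<Rightarrow> (nat \<Rightarrow> nat)" where "t1 K = (\<lambda>i. if i = 1 then K else 0)"

lemma Xt_1:
  assumes q: "norm q < 1"
  shows "Xt q 1 L = (\<Sum>K\<le>L. (q^2)^(K*(K+1)) * beta0 q K / FQ q (L-K))"
proof -
  have "(\<Sum>K\<le>L. (q^2)^(K*(K+1)) * beta0 q K / FQ q (L-K)) = (\<Sum>n\<in>Tset 1 L. Wt q 1 n / FQ q (L - Nsum n 1 1))"
  proof (rule sum.reindex_bij_witness[where j=t1 and i="\<lambda>n. n 1"])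
    fix K assume K: "K \<in> {..L}"
    show "t1 K 1 = K" by (simp add: t1_def)
    show "t1 K \<in> Tset 1 L" using K by (auto simp: t1_def Tset_def tuples_def Nsum_def)
    show "Wt q 1 (t1 K) / FQ q (L - Nsum (t1 K) 1 1) = (q^2)^(K*(K+1)) * beta0 q K / FQ q (L-K)"
      by (simp add: Wt_def beta0_def t1_def Nsum_def algebra_simps)
  next
    fix n assume n: "n \<in> Tset 1 L"
    then show "t1 (n 1) = n" by (intro ext) (auto simp: t1_def Tset_def tuples_def)
    show "n 1 \<in> {..L}" using n by (simp add: Tset_def Nsum_def)
  qed
  then show ?thesis unfolding Xt_def by simp
qed

definition Xv :: "complex \<Rightarrow> nat \<Rightarrow> nat \<Rightarrow> complex" where
  "Xv q v L = (if v = 0 then beta0 q L else Xt q v L)"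

lemma Xv_rec:
  assumes q: "norm q < 1"
  shows "Xv q (Suc v) L = (\<Sum>K\<le>L. (q^2)^(K*(K+1)) * Xv q v K / FQ q (L-K))"
proof (cases "v = 0")
  case True then show ?thesis using Xt_1[OF q] by (simp add: Xv_def)
next
  case False then show ?thesis using Xt_rec[OF _ q, of v L] by (simp add: Xv_def)
qed

lemma chain:
  assumes q: "norm q < 1"
  shows "Xv q v L = (\<Sum>r\<le>L. (q^2)^(v * (r * (r+1))) * acoef q r / (FQ q (L-r) * FQ q (L+r+1)))"
proof (induction v arbitrary: L)
  case 0
  then show ?case using base_identity[OF q] by (simp add: Xv_def)
next
  case (Suc v)
  have p: "norm (q^2) < 1" using q by (simp add: norm_power power_less_one_iff)
  have "Xv q (Suc v) L = (\<Sum>K\<le>L. (q^2)^(K*(K+1)) * Xv q v K / FQ q (L-K))"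
    by (rule Xv_rec[OF q])
  also have "\<dots> = (\<Sum>r\<le>L. (q^2)^(r*(r+1)) * ((q^2)^(v * (r * (r+1))) * acoef q r) / (FQ q (L-r) * FQ q (L+r+1)))"
    by (rule bailey[OF p]) (rule Suc.IH)
  also have "\<dots> = (\<Sum>r\<le>L. (q^2)^(Suc v * (r * (r+1))) * acoef q r / (FQ q (L-r) * FQ q (L+r+1)))"
    by (rule sum.cong) (auto simp: power_add mult.assoc)
  finally show ?case .
qed

lemma leg3_shift: "leg3 (int r + 1 + 1) = - leg3 (1 - int r)"
proof -
  have "(int r + 1 + 1) mod 3 = 1 \<longleftrightarrow> (1 - int r) mod 3 = 2" by presburger
  moreover have "(int r + 1 + 1) mod 3 = 2 \<longleftrightarrow> (1 - int r) mod 3 = 1" by presburger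
  ultimately show ?thesis unfolding leg3_def by auto
qed

lemma int_pair_sum:
  "(\<Sum>j\<in>{- int L..int L + 1}. h j) = (\<Sum>r\<le>L. h (int r + 1) + h (- int r))" for h :: "int \<Rightarrow> complex"
proof -
  have U: "{- int L..int L + 1} = (\<lambda>r. int r + 1) ` {..L} \<union> (\<lambda>r. - int r) ` {..L}"
  proof (rule set_eqI, rule iffI)
    fix j assume j: "j \<in> {- int L..int L + 1}"
    show "j \<in> (\<lambda>r. int r + 1) ` {..L} \<union> (\<lambda>r. - int r) ` {..L}"
    proof (cases "j \<ge> 1")
      case True
      then have "j = int (nat (j - 1)) + 1" "nat (j - 1) \<in> {..L}" using j by auto
      then show ?thesis by blast
    next
      case False
      then have "j = - int (nat (- j))" "nat (- j) \<in> {..L}" using j by auto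
      then show ?thesis by blast
    qed
  qed auto
  have D: "(\<lambda>r. int r + 1) ` {..L} \<inter> (\<lambda>r. - int r) ` {..L} = {}" by auto
  have "(\<Sum>j\<in>{- int L..int L + 1}. h j) = (\<Sum>j\<in>(\<lambda>r. int r + 1) ` {..L}. h j) + (\<Sum>j\<in>(\<lambda>r. - int r) ` {..L}. h j)"
    unfolding U by (rule sum.union_disjoint) (use D in auto)
  also have "\<dots> = (\<Sum>r\<le>L. h (int r + 1)) + (\<Sum>r\<le>L. h (- int r))"
    by (subst sum.reindex, simp add: inj_on_def)+ simp
  finally show ?thesis by (simp add: sum.distrib)
qed

theorem mainTheorem11:
  fixes q :: complex and v L :: nat
  assumes "norm q < 1" and "v \<ge> 1"
  shows "(\<Sum>\<^sub>\<infinity>n\<in>tuples v.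
            (q\<^sup>2) ^ (\<Sum>i=1..v. Nsum n v i * (Nsum n v i + 1))
            / ((\<Prod>i=1..v-1. qpoch (q\<^sup>2) (q\<^sup>2) (n i)) * qpoch (q\<^sup>2) (q\<^sup>2) (2 * n v))
            * (qpoch (q ^ 3) (q ^ 6) (n v) / qpoch q (q\<^sup>2) (1 + n v))
            * (qpoch (q\<^sup>2) (q\<^sup>2) (2 * L + 1) * inv_qfac (q\<^sup>2) (int L - int (Nsum n v 1))))
       = (\<Sum>\<^sub>\<infinity>j\<in>(UNIV :: int set).
            (-1) powi j * q powi ((2 * int v + 1) * j\<^sup>2 - 2 * int v * j)
            * of_int (leg3 (j + 1)) * qbinom (q\<^sup>2) (2 * int L + 1) (int L + j))"
proof -
  have p: "norm (q^2) < 1" using assms(1) by (simp add: norm_power power_less_one_iff)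
  define F where "F n = qpoch (q^2) (q^2) n" for n
  define f where "f n = (q\<^sup>2) ^ (\<Sum>i=1..v. Nsum n v i * (Nsum n v i + 1))
            / ((\<Prod>i=1..v-1. qpoch (q\<^sup>2) (q\<^sup>2) (n i)) * qpoch (q\<^sup>2) (q\<^sup>2) (2 * n v))
            * (qpoch (q ^ 3) (q ^ 6) (n v) / qpoch q (q\<^sup>2) (1 + n v))
            * (qpoch (q\<^sup>2) (q\<^sup>2) (2 * L + 1) * inv_qfac (q\<^sup>2) (int L - int (Nsum n v 1)))" for n
  define h where "h j = (-1) powi j * q powi ((2 * int v + 1) * j\<^sup>2 - 2 * int v * j)
            * of_int (leg3 (j + 1)) * qbinom (q\<^sup>2) (2 * int L + 1) (int L + j)" for j
  have fW: "f n = Wt q v n * (F (2*L+1) * (if Nsum n v 1 \<le> L then 1 / F (L - Nsum n v 1) else 0))" for n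
    unfolding f_def Wt_def F_def inv_qfac_def by (auto simp: nat_diff_distrib)
  have "(\<Sum>\<^sub>\<infinity>n\<in>tuples v. f n) = (\<Sum>\<^sub>\<infinity>n\<in>Tset v L. f n)"
    by (rule infsum_cong_neutral) (auto simp: Tset_def fW)
  also have "\<dots> = (\<Sum>n\<in>Tset v L. f n)" by (simp add: finite_Tset)
  also have "\<dots> = F (2*L+1) * Xt q v L"
    unfolding Xt_def sum_distrib_left
    by (rule sum.cong) (auto simp: fW Tset_def F_def)
  also have "Xt q v L = Xv q v L" using assms(2) by (simp add: Xv_def)
  also have "\<dots> = (\<Sum>r\<le>L. (q^2)^(v * (r * (r+1))) * acoef q r / (F (L-r) * F (L+r+1)))"
    unfolding F_def by (rule chain[OF assms(1)])
  finally have LHS: "(\<Sum>\<^sub>\<infinity>n\<in>tuples v. f n) = F (2*L+1) * (\<Sum>r\<le>L. (q^2)^(v * (r * (r+1))) * acoef q r / (F (L-r) * F (L+r+1)))" .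
  have "(\<Sum>\<^sub>\<infinity>j\<in>(UNIV :: int set). h j) = (\<Sum>\<^sub>\<infinity>j\<in>{- int L..int L + 1}. h j)"
    by (rule infsum_cong_neutral) (auto simp: h_def qbinom_def)
  also have "\<dots> = (\<Sum>j\<in>{- int L..int L + 1}. h j)" by simp
  also have "\<dots> = (\<Sum>r\<le>L. h (int r + 1) + h (- int r))" by (rule int_pair_sum)
  also have "\<dots> = (\<Sum>r\<le>L. F (2*L+1) * ((q^2)^(v * (r * (r+1))) * acoef q r / (F (L-r) * F (L+r+1))))"
  proof (rule sum.cong[OF refl])
    fix r assume r: "r \<in> {..L}"
    define G where "G = F (2*L+1) / (F (L-r) * F (L+r+1))"
    have qb1: "qbinom (q\<^sup>2) (2 * int L + 1) (int L + (int r + 1)) = G"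
    proof -
      have "nat (2 * int L + 1) = 2*L+1" "nat (int L + (int r + 1)) = L+r+1"
           "nat (2 * int L + 1 - (int L + (int r + 1))) = L - r" using r by auto
      then show ?thesis using r by (simp add: qbinom_def G_def F_def mult.commute)
    qed
    have qb2: "qbinom (q\<^sup>2) (2 * int L + 1) (int L + - int r) = G"
    proof -
      have "nat (2 * int L + 1) = 2*L+1" "nat (int L + - int r) = L-r"
           "nat (2 * int L + 1 - (int L + - int r)) = L + r + 1" using r by auto
      then show ?thesis using r by (simp add: qbinom_def G_def F_def)
    qed
    define E where "E = v * (r * (r+1))"
    have ex1: "(2 * int v + 1) * (int r + 1)\<^sup>2 - 2 * int v * (int r + 1) = int (2*E + r*r + (2*r+1))"
      by (simp add: E_def power2_eq_square algebra_simps)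
    have ex2: "(2 * int v + 1) * (- int r)\<^sup>2 - 2 * int v * (- int r) = int (2*E + r*r)"
      by (simp add: E_def power2_eq_square algebra_simps)
    have s1: "(-1::complex) powi (int r + 1) = - ((-1)^r)"
    proof -
      have "int r + 1 = int (Suc r)" by simp
      then show ?thesis by (simp only: power_int_of_nat) simp
    qed
    have s2: "(-1::complex) powi (- int r) = (-1)^r"
      by (simp add: power_int_minus flip: power_inverse)
    have h1: "h (int r + 1) = - ((-1)^r) * ((q^2)^E * q^(r*r) * q^(2*r+1)) * of_int (- leg3 (1 - int r)) * G"
      unfolding h_def ex1 qb1 s1 power_int_of_nat leg3_shift
      by (simp add: power_add power_mult)
    have h2: "h (- int r) = (-1)^r * ((q^2)^E * q^(r*r)) * of_int (leg3 (1 - int r)) * G"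
      unfolding h_def ex2 qb2 s2 power_int_of_nat
      by (simp add: power_add power_mult)
    show "h (int r + 1) + h (- int r) = F (2*L+1) * ((q^2)^(v * (r * (r+1))) * acoef q r / (F (L-r) * F (L+r+1)))"
      unfolding h1 h2 acoef_def E_def[symmetric] G_def by (simp add: algebra_simps add_divide_distrib)
  qed
  also have "\<dots> = F (2*L+1) * (\<Sum>r\<le>L. (q^2)^(v * (r * (r+1))) * acoef q r / (F (L-r) * F (L+r+1)))"
    by (simp add: sum_distrib_left)
  finally have RHS: "(\<Sum>\<^sub>\<infinity>j\<in>(UNIV :: int set). h j) = F (2*L+1) * (\<Sum>r\<le>L. (q^2)^(v * (r * (r+1))) * acoef q r / (F (L-r) * F (L+r+1)))" .
  show ?thesis using LHS RHS unfolding f_def h_def by simp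
qed

end
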